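(* Let $n=p^2$ where $p$ is an odd prime, and let $G=\langle p-1\rangle$ be the subgroup of $\mathbb{Z}_n^\times$ generated by $p-1$. Then the coset index function $f_G$ is a $(p^2,p,\{p,p^2-p+1\})$ zero-difference function.
   Context: For a subgroup $G$ of $\mathbb{Z}_n^\times$ and $r\in\mathbb{Z}_n$, the coset $rG=\{rg\mid g\in G\}$; these cosets partition $\mathbb{Z}_n$, forming a set $D_G$. The coset index function induced by $G$ is $f_G:\mathbb{Z}_n\to\mathbb{Z}_{|D_G|}$, $f_G(x)=h_G(C_x)$, where $C_x$ is the coset containing $x$ and $h_G:D_G\to\mathbb{Z}_{|D_G|}$ is a fixed bijection. A function $f:A\to B$ between finite abelian groups is an $(n,m,S)$ zero-difference function if $n=|A|$, $m=|f(A)|$, and for every nonzero $a\in A$, $|\{x\in A\mid f(x+a)=f(x)\}|\in S$. Here $A=(\mathbb{Z}_n,+)$. *)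

theory Defs
  imports "HOL-Number_Theory.Number_Theory"
begin

text \<open>Z_n is represented by {0..<n} with arithmetic mod n.\<close>

definition units_mod :: "nat \<Rightarrow> nat set" where
  "units_mod n = {x \<in> {0..<n}. coprime x n}"

definition gen_subgroup :: "nat \<Rightarrow> nat \<Rightarrow> nat set" where
  "gen_subgroup n g = {(g ^ k) mod n | k. True}"

definition coset :: "nat \<Rightarrow> nat set \<Rightarrow> nat \<Rightarrow> nat set" where
  "coset n G r = {(r * g) mod n | g. g \<in> G}"

definition cosets :: "nat \<Rightarrow> nat set \<Rightarrow> nat set set" where
  "cosets n G = (\<lambda>r. coset n G r) ` {0..<n}"

definition coset_index_fn :: "nat \<Rightarrow> nat set \<Rightarrow> (nat set \<Rightarrow> nat) \<Rightarrow> nat \<Rightarrow> nat" where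
  "coset_index_fn n G h x = h (THE C. C \<in> cosets n G \<and> x \<in> C)"

definition zero_difference_fn :: "nat \<Rightarrow> nat \<Rightarrow> nat set \<Rightarrow> (nat \<Rightarrow> 'b) \<Rightarrow> bool" where
  "zero_difference_fn n m S f \<longleftrightarrow>
     card (f ` {0..<n}) = m \<and>
     (\<forall>a \<in> {0..<n}. a \<noteq> 0 \<longrightarrow>
        card {x \<in> {0..<n}. f ((x + a) mod n) = f x} \<in> S)"

end

theory Submission
  imports Defs
begin

lemma sq_formula:
  fixes p :: int
  shows "\<exists>q. (p - 1) ^ (2 * m) = 1 - 2 * int m * p + p^2 * q"
proof (induction m)
  case 0 then show ?case by (auto intro: exI[of _ 0])
next
  case (Suc m)
  then obtain q where q: "(p - 1) ^ (2 * m) = 1 - 2 * int m * p + p^2 * q" by blast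
  have "(p - 1) ^ (2 * Suc m) = (p - 1) ^ (2 * m) * (p - 1)^2"
    by (simp add: power_add[symmetric])
  also have "\<dots> = 1 - 2 * int (Suc m) * p + p^2 * (q*(p-1)^2 + 1 + 4 * int m - 2 * int m * p)"
    unfolding q by (simp add: algebra_simps power2_eq_square)
  finally show ?case by blast
qed

lemma solve_lin:
  fixes p :: nat and x c :: int
  assumes "prime p" "odd p" "\<not> int p dvd x"
  shows "\<exists>m::nat. int p dvd 2 * int m * x - c"
proof -
  have pr: "prime (int p)" using assms(1) by simp
  have "\<not> int p dvd 2 * x"
  proof
    assume "int p dvd 2 * x"
    then have "int p dvd 2 \<or> int p dvd x" using pr prime_dvd_mult_iff by blast
    moreover have "\<not> int p dvd 2"
    proof
      assume "int p dvd 2" then have "p dvd 2" by (metis int_dvd_int_iff of_nat_numeral)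
      then have "p \<le> 2" by (simp add: dvd_imp_le)
      then have "p = 2" using prime_ge_2_nat[OF assms(1)] by simp
      then show False using assms by auto
    qed
    ultimately show False using assms(3) by blast
  qed
  then have "coprime (2 * x) (int p)" by (subst coprime_commute) (rule prime_imp_coprime[OF pr])
  then obtain u where u: "[2 * x * u = 1] (mod int p)" using cong_solve_coprime_int by blast
  define m where "m = nat ((c * u) mod int p)"
  have pp: "int p > 0" using assms prime_gt_0_nat by simp
  have m: "int m = (c * u) mod int p" unfolding m_def using pp by simp
  have mc: "[int m = c * u] (mod int p)" unfolding m by (simp add: cong_def)
  have "[2 * int m * x = 2 * (c * u) * x] (mod int p)"
    by (rule cong_mult[OF cong_mult[OF cong_refl mc] cong_refl])
  also have "[2 * (c * u) * x = c * (2 * x * u)] (mod int p)" by (simp add: algebra_simps)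
  also have "[c * (2 * x * u) = c * 1] (mod int p)" by (rule cong_mult[OF cong_refl u])
  finally show ?thesis by (auto simp: cong_iff_dvd_diff)
qed

definition RR :: "nat \<Rightarrow> nat \<Rightarrow> nat \<Rightarrow> bool" where
  "RR p x y \<longleftrightarrow> (\<not> p dvd x \<and> (int p dvd int y - int x \<or> int p dvd int y + int x))
      \<or> (p dvd x \<and> (y = x \<or> x + y = p^2))"

lemma A1:
  assumes "prime p" "odd p" "x < p^2"
  shows "RR p x (x * (p - 1) ^ k mod p^2)"
proof -
  define y where "y = x * (p - 1) ^ k mod p^2"
  have p1: "p \<ge> 1" using prime_ge_1_nat[OF assms(1)] .
  have yi: "int y = (int x * (int p - 1) ^ k) mod (int p)^2"
    unfolding y_def using p1 by (simp add: of_nat_mod of_nat_diff)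
  have n_dvd: "(int p)^2 dvd int y - int x * (int p - 1) ^ k"
    unfolding yi by (simp add: mod_eq_dvd_iff[symmetric])
  have "[int p - 1 = -1] (mod int p)" by (simp add: cong_iff_dvd_diff)
  then have "[(int p - 1) ^ k = (-1) ^ k] (mod int p)" by (rule cong_pow)
  then have c: "int p dvd (int p - 1) ^ k - (-1) ^ k" by (simp add: cong_iff_dvd_diff)
  show ?thesis
  proof (cases "p dvd x")
    case False
    have "int p dvd int y - int x * (int p - 1) ^ k"
      using dvd_trans[OF _ n_dvd, of "int p"] by (simp add: power2_eq_square)
    moreover have "int p dvd int x * ((int p - 1) ^ k - (-1) ^ k)" using c by simp
    ultimately have "int p dvd (int y - int x * (int p - 1) ^ k) + int x * ((int p - 1) ^ k - (-1) ^ k)"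
      by (rule dvd_add)
    then have d: "int p dvd int y - int x * (-1) ^ k" by (simp add: algebra_simps)
    show ?thesis
    proof (cases "even k")
      case True
      then show ?thesis using d False unfolding RR_def y_def by simp
    next
      case False
      then show ?thesis using d \<open>\<not> p dvd x\<close> unfolding RR_def y_def by simp
    qed
  next
    case True
    then obtain s where s: "x = p * s" by blast
    have "(int p)^2 dvd int x * ((int p - 1) ^ k - (-1) ^ k)"
      using c unfolding s power2_eq_square by (simp add: mult_dvd_mono)
    then have "(int p)^2 dvd (int y - int x * (int p - 1) ^ k) + int x * ((int p - 1) ^ k - (-1) ^ k)"
      using n_dvd by (rule dvd_add[rotated])
    then have d: "(int p)^2 dvd int y - int x * (-1) ^ k" by (simp add: algebra_simps)
    have ylt: "y < p^2" unfolding y_def using assms prime_gt_0_nat by simp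
    have yl: "int y < (int p)^2" using ylt by (metis of_nat_less_iff of_nat_power)
    have xl: "int x < (int p)^2" using assms(3) by (metis of_nat_less_iff of_nat_power)
    have ym: "int y = (int x * (-1) ^ k) mod (int p)^2"
    proof -
      have "int y mod (int p)^2 = (int x * (-1) ^ k) mod (int p)^2"
        using d by (simp add: mod_eq_dvd_iff)
      moreover have "int y mod (int p)^2 = int y" using yl by simp
      ultimately show ?thesis by simp
    qed
    show ?thesis
    proof (cases "even k")
      case True
      then have "int y = int x" using ym xl by simp
      then show ?thesis using \<open>p dvd x\<close> unfolding RR_def y_def[symmetric] by simp
    next
      case False
      then have ym2: "int y = (- int x) mod (int p)^2" using ym by simp
      show ?thesis
      proof (cases "x = 0")
        case True
        then have "y = 0" using ym2 by simp
        then show ?thesis using True unfolding RR_def y_def[symmetric] by simp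
      next
        case False
        have "(- int x) mod (int p)^2 = (int p)^2 - int x"
          using False xl by (simp add: zmod_zminus1_eq_if)
        then have "int x + int y = (int p)^2" using ym2 by simp
        then have "x + y = p^2" by (metis of_nat_add of_nat_eq_iff of_nat_power)
        then show ?thesis using \<open>p dvd x\<close> unfolding RR_def y_def[symmetric] by simp
      qed
    qed
  qed
qed

lemma int_dvd_to_mod:
  assumes "(int p)^2 dvd int x * (int p - 1) ^ k - int y" "y < p^2"
  shows "y = x * (p - 1) ^ k mod p^2"
proof -
  have p1: "p \<ge> 1" using assms(2) by (cases p) auto
  have "(int p)^2 dvd int y - int x * (int p - 1) ^ k"
    using assms(1) by (metis dvd_minus_iff minus_diff_eq)
  then have "int y mod (int p)^2 = (int x * (int p - 1) ^ k) mod (int p)^2"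
    by (simp only: mod_eq_dvd_iff)
  moreover have yl: "int y < (int p)^2" using assms(2) by (metis of_nat_less_iff of_nat_power)
  moreover have "int y mod (int p)^2 = int y" using yl by simp
  ultimately have "int y = int (x * (p - 1) ^ k mod p^2)"
    using p1 by (simp add: of_nat_mod of_nat_diff)
  then show ?thesis by simp
qed

lemma A2:
  assumes "prime p" "odd p" "x < p^2" "y < p^2" "RR p x y"
  shows "\<exists>k. y = x * (p - 1) ^ k mod p^2"
proof -
  let ?P = "int p"
  have p1: "p \<ge> 1" using prime_ge_1_nat[OF assms(1)] .
  show ?thesis
  proof (cases "p dvd x")
    case True
    then obtain s where s: "x = p * s" by blast
    have "y = x \<or> x + y = p^2" using assms(5) True unfolding RR_def by auto
    then show ?thesis
    proof
      assume "y = x" then show ?thesis using assms(3) by (intro exI[of _ 0]) simp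
    next
      assume h: "x + y = p^2"
      have "int x + int y = ?P^2" using h by (metis of_nat_add of_nat_power)
      then have "int x * (?P - 1) ^ 1 - int y = ?P^2 * (int s - 1)"
        unfolding s by (simp add: algebra_simps power2_eq_square)
      then have "?P^2 dvd int x * (?P - 1) ^ 1 - int y" by simp
      then show ?thesis using int_dvd_to_mod assms(4) by blast
    qed
  next
    case False
    then have nd: "\<not> ?P dvd int x" by simp
    have "?P dvd int y - int x \<or> ?P dvd int y + int x" using assms(5) False unfolding RR_def by auto
    then show ?thesis
    proof
      assume "?P dvd int y - int x"
      then obtain t where t: "int y - int x = ?P * t" by blast
      obtain m where "?P dvd 2 * int m * int x - (- t)" using solve_lin[OF assms(1,2) nd] by blast
      then have "?P dvd 2 * int m * int x + t" by simp
      then obtain r where r: "2 * int m * int x + t = ?P * r" by (rule dvdE)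
      obtain q where q: "(?P - 1) ^ (2 * m) = 1 - 2 * int m * ?P + ?P^2 * q" using sq_formula by blast
      have "int x * (?P - 1) ^ (2 * m) - int y = ?P^2 * (q * int x - r)"
      proof -
        have ty: "int y = int x + ?P * t" using t by simp
        have "int x * (?P - 1) ^ (2 * m) - int y = int x * (1 - 2 * int m * ?P + ?P^2 * q) - (int x + ?P * t)"
          unfolding q ty ..
        also have "\<dots> = ?P^2 * q * int x - ?P * (2 * int m * int x + t)" by (simp add: algebra_simps)
        also have "\<dots> = ?P^2 * (q * int x - r)" unfolding r by (simp add: algebra_simps power2_eq_square)
        finally show ?thesis .
      qed
      then have "?P^2 dvd int x * (?P - 1) ^ (2 * m) - int y" by simp
      then show ?thesis using int_dvd_to_mod assms(4) by blast
    next
      assume "?P dvd int y + int x"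
      then obtain t where t: "int y + int x = ?P * t" by blast
      obtain m where "?P dvd 2 * int m * int x - (t - int x)" using solve_lin[OF assms(1,2) nd] by blast
      moreover have "2 * int m * int x - (t - int x) = 2 * int m * int x - t + int x" by simp
      ultimately have "?P dvd 2 * int m * int x - t + int x" by simp
      then obtain r where r: "2 * int m * int x - t + int x = ?P * r" by (rule dvdE)
      obtain q where q: "(?P - 1) ^ (2 * m) = 1 - 2 * int m * ?P + ?P^2 * q" using sq_formula by blast
      have "int x * (?P - 1) ^ (2 * m + 1) - int y = ?P^2 * (q * int x * (?P - 1) - 2 * int m * int x + r)"
      proof -
        have ty: "int y = ?P * t - int x" using t by simp
        have "int x * (?P - 1) ^ (2 * m + 1) - int y = int x * ((1 - 2 * int m * ?P + ?P^2 * q) * (?P - 1)) - (?P * t - int x)"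
          unfolding power_add power_one_right q ty ..
        also have "\<dots> = ?P^2 * (q * int x * (?P - 1) - 2 * int m * int x) + ?P * (2 * int m * int x - t + int x)"
          by (simp add: algebra_simps power2_eq_square)
        also have "\<dots> = ?P^2 * (q * int x * (?P - 1) - 2 * int m * int x + r)" unfolding r by (simp add: algebra_simps power2_eq_square)
        finally show ?thesis .
      qed
      then have "?P^2 dvd int x * (?P - 1) ^ (2 * m + 1) - int y" by simp
      then show ?thesis using int_dvd_to_mod assms(4) by blast
    qed
  qed
qed

lemma count_mult:
  fixes q n :: nat
  assumes "q > 0" "q dvd n"
  shows "card {z. z < n \<and> q dvd z} = n div q"
proof -
  have "{z. z < n \<and> q dvd z} = (\<lambda>j. q * j) ` {0..<n div q}"
  proof (intro Set.set_eqI iffI)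
    fix z assume "z \<in> {z. z < n \<and> q dvd z}"
    then obtain j where j: "z = q * j" "q * j < n" by auto
    then have "j < n div q" using assms
      by (metis dvd_mult_div_cancel mult_less_cancel1)
    then show "z \<in> (\<lambda>j. q * j) ` {0..<n div q}" using j by auto
  next
    fix z assume "z \<in> (\<lambda>j. q * j) ` {0..<n div q}"
    then obtain j where j0: "z = q * j" "j \<in> {0..<n div q}" by (metis imageE)
    then have j: "z = q * j" "j < n div q" by auto
    have "q * j < q * (n div q)" using j(2) assms(1) by (rule mult_strict_left_mono)
    also have "\<dots> = n" using assms by simp
    finally show "z \<in> {z. z < n \<and> q dvd z}" using j by auto
  qed
  moreover have "inj_on (\<lambda>j. q * j) {0..<n div q}" using assms by (auto simp: inj_on_def)
  ultimately show ?thesis by (simp add: card_image)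
qed

lemma count_lin:
  fixes q n a :: nat
  assumes "odd n" "q > 0" "q dvd n"
  shows "card {x. x < n \<and> q dvd 2 * x + a} = n div q"
proof -
  define \<phi> where "\<phi> x = (2 * x + a) mod n" for x
  have n0: "n > 0" using assms by (cases n) auto
  have inj: "inj_on \<phi> {0..<n}"
  proof (rule inj_onI)
    fix x y assume xy: "x \<in> {0..<n}" "y \<in> {0..<n}" "\<phi> x = \<phi> y"
    then have "int ((2 * x + a) mod n) = int ((2 * y + a) mod n)" unfolding \<phi>_def by simp
    then have "(2 * int x + int a) mod int n = (2 * int y + int a) mod int n" by (simp add: of_nat_mod)
    then have "int n dvd (2 * int x + int a) - (2 * int y + int a)" by (simp only: mod_eq_dvd_iff)
    then have d: "int n dvd 2 * (int x - int y)" by (simp add: algebra_simps)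
    have "coprime (int n) 2" using assms(1) by (simp add: coprime_commute)
    then have "int n dvd int x - int y" using d coprime_dvd_mult_right_iff by blast
    then have "int x mod int n = int y mod int n" by (simp only: mod_eq_dvd_iff)
    then show "x = y" using xy by simp
  qed
  have surj: "\<phi> ` {0..<n} = {0..<n}"
    by (rule endo_inj_surj) (use inj n0 in \<open>auto simp: \<phi>_def\<close>)
  have eq: "{x. x < n \<and> q dvd 2 * x + a} = {x \<in> {0..<n}. q dvd \<phi> x}"
    using assms(3) by (auto simp: \<phi>_def dvd_mod_iff)
  have "\<phi> ` {x \<in> {0..<n}. q dvd \<phi> x} = {z \<in> \<phi> ` {0..<n}. q dvd z}" by auto
  also have "\<dots> = {z. z < n \<and> q dvd z}" using surj by auto
  finally have im: "\<phi> ` {x \<in> {0..<n}. q dvd \<phi> x} = {z. z < n \<and> q dvd z}" .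
  have "card {x \<in> {0..<n}. q dvd \<phi> x} = card (\<phi> ` {x \<in> {0..<n}. q dvd \<phi> x})"
    by (rule card_image[symmetric]) (rule inj_on_subset[OF inj], auto)
  then show ?thesis using eq im count_mult[OF assms(2,3)] by simp
qed

lemma RR_refl: "RR p x x"
  unfolding RR_def by auto

lemma RR_ndvd:
  assumes "RR p x y" "\<not> p dvd x" shows "\<not> p dvd y"
proof
  assume "p dvd y"
  then have py: "int p dvd int y" by simp
  from assms have "int p dvd int y - int x \<or> int p dvd int y + int x" unfolding RR_def by auto
  then have "int p dvd int x"
  proof
    assume "int p dvd int y - int x"
    then have "int p dvd int y - (int y - int x)" using py by (rule dvd_diff[rotated])
    then show ?thesis by simp
  next
    assume "int p dvd int y + int x"
    then have "int p dvd (int y + int x) - int y" using py by (rule dvd_diff)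
    then show ?thesis by simp
  qed
  then show False using assms(2) by simp
qed

lemma RR_dvd:
  assumes "RR p x y" "p dvd x" shows "p dvd y \<and> (y = x \<or> x + y = p^2)"
proof -
  have h: "y = x \<or> x + y = p^2" using assms unfolding RR_def by auto
  then show ?thesis
  proof
    assume "x + y = p^2"
    then have "y = p * p - x" by (simp add: power2_eq_square)
    then have "p dvd y" using assms(2) by (simp add: dvd_diff_nat)
    then show ?thesis using h by simp
  qed (use assms in auto)
qed

lemma RR_sym:
  assumes "RR p x y" shows "RR p y x"
proof (cases "p dvd x")
  case True
  then show ?thesis using RR_dvd[OF assms True] unfolding RR_def by (auto simp: add.commute)
next
  case False
  have ny: "\<not> p dvd y" using RR_ndvd[OF assms False] .
  have "int p dvd int y - int x \<or> int p dvd int y + int x" using assms False unfolding RR_def by auto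
  then have "int p dvd int x - int y \<or> int p dvd int x + int y"
    by (metis dvd_diff_commute add.commute)
  then show ?thesis using ny unfolding RR_def by auto
qed

lemma RR_trans:
  assumes "RR p x y" "RR p y z" shows "RR p x z"
proof (cases "p dvd x")
  case True
  have y: "p dvd y" "y = x \<or> x + y = p^2" using RR_dvd[OF assms(1) True] by auto
  have z: "z = y \<or> y + z = p^2" using RR_dvd[OF assms(2) y(1)] by auto
  from y(2) z have "z = x \<or> x + z = p^2" by auto
  then show ?thesis using True unfolding RR_def by auto
next
  case False
  have ny: "\<not> p dvd y" using RR_ndvd[OF assms(1) False] .
  have nz: "\<not> p dvd z" using RR_ndvd[OF assms(2) ny] .
  have h1: "int p dvd int y - int x \<or> int p dvd int y + int x" using assms(1) False unfolding RR_def by auto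
  have h2: "int p dvd int z - int y \<or> int p dvd int z + int y" using assms(2) ny unfolding RR_def by auto
  have "int p dvd int z - int x \<or> int p dvd int z + int x"
  proof -
    have e1: "int z - int x = (int z - int y) + (int y - int x)" by simp
    have e2: "int z + int x = (int z - int y) + (int y + int x)" by simp
    have e3: "int z + int x = (int z + int y) - (int y - int x)" by simp
    have e4: "int z - int x = (int z + int y) - (int y + int x)" by simp
    show ?thesis using h1 h2
      by (metis e1 e2 e3 e4 dvd_add dvd_diff)
  qed
  then show ?thesis using False unfolding RR_def by auto
qed

definition KK :: "nat \<Rightarrow> nat \<Rightarrow> nat" where
  "KK p x = (if p dvd x then p + min (x div p) (p - x div p) else min (x mod p) (p - x mod p))"

lemma dvd_minus_mod: "int p dvd int y - int x \<longleftrightarrow> x mod p = y mod p"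
proof -
  have "x mod p = y mod p \<longleftrightarrow> [x = y] (mod p)" by (simp add: cong_def)
  also have "\<dots> \<longleftrightarrow> [int x = int y] (mod int p)" by (simp add: cong_int_iff)
  also have "\<dots> \<longleftrightarrow> int p dvd int x - int y" by (simp add: cong_iff_dvd_diff)
  also have "\<dots> \<longleftrightarrow> int p dvd int y - int x" by (simp add: dvd_diff_commute)
  finally show ?thesis by simp
qed

lemma dvd_plus_mod:
  assumes "\<not> p dvd x" "\<not> p dvd y" and p0: "p > 0"
  shows "int p dvd int y + int x \<longleftrightarrow> x mod p + y mod p = p"
proof -
  have r: "0 < x mod p" "x mod p < p" using assms p0 by (auto simp: mod_greater_zero_iff_not_dvd)
  have s: "0 < y mod p" "y mod p < p" using assms p0 by (auto simp: mod_greater_zero_iff_not_dvd)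
  have "int p dvd int y + int x \<longleftrightarrow> p dvd x + y" unfolding of_nat_add[symmetric] int_dvd_int_iff by (simp add: add.commute)
  also have "\<dots> \<longleftrightarrow> p dvd x mod p + y mod p" by (simp add: dvd_eq_mod_eq_0 mod_add_eq)
  also have "\<dots> \<longleftrightarrow> x mod p + y mod p = p"
  proof
    assume "p dvd x mod p + y mod p"
    then obtain k where k: "x mod p + y mod p = p * k" by blast
    have "k > 0" using k r s by (cases k) auto
    moreover have "p * k < p * 2" using k r s by linarith
    then have "k < 2" by simp
    ultimately have "k = 1" by simp
    then show "x mod p + y mod p = p" using k by simp
  qed simp
  finally show ?thesis .
qed

lemma RR_KK:
  assumes "prime p" "x < p^2" "y < p^2"
  shows "RR p x y \<longleftrightarrow> KK p x = KK p y"
proof -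
  have p0: "p > 0" using assms prime_gt_0_nat by simp
  have dl: "z div p < p" if "z < p^2" for z using that p0
    by (simp add: div_less_iff_less_mult power2_eq_square)
  have ml: "min (z mod p) (p - z mod p) < p" for z using p0 by simp
  show ?thesis
  proof (cases "p dvd x"; cases "p dvd y")
    assume px: "p dvd x" and py: "p dvd y"
    obtain a where a: "x = p * a" using px by blast
    obtain b where b: "y = p * b" using py by blast
    have ap: "a < p" using dl[OF assms(2)] a p0 by simp
    have bp: "b < p" using dl[OF assms(3)] b p0 by simp
    have "RR p x y \<longleftrightarrow> (b = a \<or> a + b = p)"
      unfolding RR_def using px a b p0 by (auto simp: power2_eq_square add_mult_distrib2[symmetric])
    also have "\<dots> \<longleftrightarrow> KK p x = KK p y"
      unfolding KK_def using px py a b p0 ap bp by auto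
    finally show ?thesis .
  next
    assume px: "p dvd x" and py: "\<not> p dvd y"
    have "\<not> RR p y x" using RR_ndvd[of p y x] py px by auto
    then have "\<not> RR p x y" using RR_sym by blast
    moreover have "KK p x \<noteq> KK p y" unfolding KK_def using px py ml[of y] by auto
    ultimately show ?thesis by simp
  next
    assume px: "\<not> p dvd x" and py: "p dvd y"
    have "\<not> RR p x y" using RR_ndvd[of p x y] py px by auto
    moreover have "KK p x \<noteq> KK p y" unfolding KK_def using px py ml[of x] by auto
    ultimately show ?thesis by simp
  next
    assume px: "\<not> p dvd x" and py: "\<not> p dvd y"
    have r: "0 < x mod p" "x mod p < p" using px p0 by (auto simp: mod_greater_zero_iff_not_dvd)
    have s: "0 < y mod p" "y mod p < p" using py p0 by (auto simp: mod_greater_zero_iff_not_dvd)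
    have "RR p x y \<longleftrightarrow> (x mod p = y mod p \<or> x mod p + y mod p = p)"
      unfolding RR_def using px py dvd_minus_mod[of p y x] dvd_plus_mod[OF px py p0] by auto
    also have "\<dots> \<longleftrightarrow> KK p x = KK p y"
      unfolding KK_def using px py r s by auto
    finally show ?thesis .
  qed
qed

lemma coset_char:
  assumes "prime p" "odd p" "x < p^2"
  shows "coset (p^2) (gen_subgroup (p^2) (p - 1)) x = {y. y < p^2 \<and> RR p x y}"
proof (intro Set.set_eqI iffI)
  fix y assume "y \<in> coset (p^2) (gen_subgroup (p^2) (p - 1)) x"
  then obtain k where k: "y = x * ((p - 1) ^ k mod p^2) mod p^2"
    unfolding coset_def gen_subgroup_def by blast
  then have y: "y = x * (p - 1) ^ k mod p^2" by (simp add: mod_mult_right_eq)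
  have "p^2 > 0" using assms prime_gt_0_nat by simp
  then show "y \<in> {y. y < p^2 \<and> RR p x y}" using y A1[OF assms, of k] by simp
next
  fix y assume "y \<in> {y. y < p^2 \<and> RR p x y}"
  then obtain k where k: "y = x * (p - 1) ^ k mod p^2" using A2[OF assms] by blast
  then have "y = x * ((p - 1) ^ k mod p^2) mod p^2" by (simp add: mod_mult_right_eq)
  then show "y \<in> coset (p^2) (gen_subgroup (p^2) (p - 1)) x"
    unfolding coset_def gen_subgroup_def by blast
qed

lemma RR_set_eq:
  assumes "RR p x y"
  shows "{z. z < n \<and> RR p x z} = {z. z < n \<and> RR p y z}"
  using assms RR_sym RR_trans by blast

lemma the_coset:
  assumes "prime p" "odd p" "x < p^2"
  shows "(THE C. C \<in> cosets (p^2) (gen_subgroup (p^2) (p - 1)) \<and> x \<in> C) = coset (p^2) (gen_subgroup (p^2) (p - 1)) x"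
proof (rule the_equality)
  show "coset (p^2) (gen_subgroup (p^2) (p - 1)) x \<in> cosets (p^2) (gen_subgroup (p^2) (p - 1)) \<and>
        x \<in> coset (p^2) (gen_subgroup (p^2) (p - 1)) x"
  proof
    show "coset (p^2) (gen_subgroup (p^2) (p - 1)) x \<in> cosets (p^2) (gen_subgroup (p^2) (p - 1))"
      unfolding cosets_def using assms(3) by auto
    show "x \<in> coset (p^2) (gen_subgroup (p^2) (p - 1)) x"
      unfolding coset_char[OF assms] using assms(3) RR_refl by auto
  qed
next
  fix C assume C: "C \<in> cosets (p^2) (gen_subgroup (p^2) (p - 1)) \<and> x \<in> C"
  then obtain r where r: "r < p^2" "C = coset (p^2) (gen_subgroup (p^2) (p - 1)) r"
    unfolding cosets_def by auto
  have Cr: "C = {y. y < p^2 \<and> RR p r y}" using r coset_char[OF assms(1,2) r(1)] by simp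
  then have "RR p r x" using C by auto
  then show "C = coset (p^2) (gen_subgroup (p^2) (p - 1)) x"
    unfolding Cr coset_char[OF assms] by (rule RR_set_eq)
qed

lemma f_eq:
  assumes "prime p" "odd p" "x < p^2" "y < p^2"
    and h: "bij_betw h (cosets (p^2) (gen_subgroup (p^2) (p - 1))) B"
  shows "coset_index_fn (p^2) (gen_subgroup (p^2) (p - 1)) h x = coset_index_fn (p^2) (gen_subgroup (p^2) (p - 1)) h y
     \<longleftrightarrow> RR p x y"
proof -
  let ?G = "gen_subgroup (p^2) (p - 1)"
  have inj: "inj_on h (cosets (p^2) ?G)" using h by (rule bij_betw_imp_inj_on)
  have mx: "coset (p^2) ?G x \<in> cosets (p^2) ?G" using assms(3) unfolding cosets_def by auto
  have my: "coset (p^2) ?G y \<in> cosets (p^2) ?G" using assms(4) unfolding cosets_def by auto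
  have "coset_index_fn (p^2) ?G h x = coset_index_fn (p^2) ?G h y \<longleftrightarrow> coset (p^2) ?G x = coset (p^2) ?G y"
    unfolding coset_index_fn_def the_coset[OF assms(1,2,3)] the_coset[OF assms(1,2,4)]
    using inj mx my by (auto dest: inj_onD)
  also have "\<dots> \<longleftrightarrow> RR p x y"
  proof
    assume "coset (p^2) ?G x = coset (p^2) ?G y"
    then have "y \<in> coset (p^2) ?G x" using coset_char[OF assms(1,2,4)] assms(4) RR_refl by auto
    then show "RR p x y" using coset_char[OF assms(1,2,3)] by auto
  next
    assume "RR p x y"
    then show "coset (p^2) ?G x = coset (p^2) ?G y"
      unfolding coset_char[OF assms(1,2,3)] coset_char[OF assms(1,2,4)] by (rule RR_set_eq)
  qed
  finally show ?thesis .
qed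

lemma card_eq_by_key:
  assumes "\<And>x y. x \<in> A \<Longrightarrow> y \<in> A \<Longrightarrow> F x = F y \<longleftrightarrow> K x = K y"
  shows "card (F ` A) = card (K ` A)"
proof -
  define g where "g k = F (SOME x. x \<in> A \<and> K x = k)" for k
  have gK: "g (K x) = F x" if "x \<in> A" for x
  proof -
    have "\<exists>x'. x' \<in> A \<and> K x' = K x" using that by blast
    then have "(SOME x'. x' \<in> A \<and> K x' = K x) \<in> A \<and> K (SOME x'. x' \<in> A \<and> K x' = K x) = K x"
      by (rule someI_ex)
    then show ?thesis unfolding g_def using assms that by blast
  qed
  have im: "g ` (K ` A) = F ` A" using gK by (auto simp: image_image intro!: image_cong)
  have "inj_on g (K ` A)"
  proof (rule inj_onI)
    fix u v assume "u \<in> K ` A" "v \<in> K ` A" "g u = g v"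
    then obtain x y where "x \<in> A" "y \<in> A" "u = K x" "v = K y" "g (K x) = g (K y)" by auto
    then show "u = v" using gK assms by auto
  qed
  then show ?thesis using im card_image by fastforce
qed

lemma KK_image:
  assumes "prime p" "odd p"
  shows "KK p ` {0..<p^2} = {1..(p - 1) div 2} \<union> {p..p + (p - 1) div 2}"
proof -
  obtain c where c: "p = 2 * c + 1" using assms(2) oddE by blast
  have cd: "(p - 1) div 2 = c" using c by simp
  have p0: "p > 0" using c by simp
  show ?thesis unfolding cd
  proof (intro Set.set_eqI iffI)
    fix k assume "k \<in> KK p ` {0..<p^2}"
    then obtain x where x: "x < p^2" "k = KK p x" by auto
    show "k \<in> {1..c} \<union> {p..p + c}"
    proof (cases "p dvd x")
      case True
      have "x div p < p" using x(1) p0 by (simp add: div_less_iff_less_mult power2_eq_square)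
      then have "min (x div p) (p - x div p) \<le> c" using c by linarith
      then show ?thesis using True x(2) unfolding KK_def by auto
    next
      case False
      have r: "0 < x mod p" "x mod p < p" using False p0 by (auto simp: mod_greater_zero_iff_not_dvd)
      then have "min (x mod p) (p - x mod p) \<le> c" "1 \<le> min (x mod p) (p - x mod p)" using c by linarith+
      then show ?thesis using False x(2) unfolding KK_def by auto
    qed
  next
    fix k assume k: "k \<in> {1..c} \<union> {p..p + c}"
    show "k \<in> KK p ` {0..<p^2}"
    proof (cases "k \<le> c")
      case True
      then have k1: "1 \<le> k" "k < p" using k c by auto
      then have nd: "\<not> p dvd k" using dvd_imp_le by fastforce
      have "KK p k = k" unfolding KK_def using nd k1 c True by auto
      moreover have "k < p^2" using k1 by (simp add: power2_eq_square less_le_trans[OF _ mult_le_mono1[of 1 p p]] )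
      ultimately show ?thesis by (metis atLeastLessThan_iff image_eqI zero_le)
    next
      case False
      then have kk: "p \<le> k" "k \<le> p + c" using k c by auto
      define j where "j = k - p"
      have j: "j \<le> c" "k = p + j" using kk unfolding j_def by auto
      have jp: "j < p" using j c by simp
      have "p * j < p * p" using jp p0 by simp
      then have lt: "p * j < p^2" by (simp add: power2_eq_square)
      have d1: "p dvd p * j" by simp
      have d2: "p * j div p = j" using p0 by simp
      have d3: "min j (p - j) = j" using j c by simp
      have "KK p (p * j) = p + j" unfolding KK_def d2 d3 using d1 by simp
      then show ?thesis using lt j(2) by (metis atLeastLessThan_iff image_eqI zero_le)
    qed
  qed
qed

lemma card_KK_image:
  assumes "prime p" "odd p"
  shows "card (KK p ` {0..<p^2}) = p"
proof -
  obtain c where c: "p = 2 * c + 1" using assms(2) oddE by blast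
  have "card ({1..(p - 1) div 2} \<union> {p..p + (p - 1) div 2}) = card {1..(p - 1) div 2} + card {p..p + (p - 1) div 2}"
    by (rule card_Un_disjoint) (use c in auto)
  also have "\<dots> = p" using c by simp
  finally show ?thesis unfolding KK_image[OF assms] .
qed

lemma pt1:
  assumes "\<not> p dvd a" and e: "int x + int a = (int p)^2 * Q + int y"
  shows "RR p x y \<longleftrightarrow> p dvd 2 * x + a"
proof -
  let ?P = "int p"
  have pq: "?P dvd ?P^2 * Q" by (simp add: power2_eq_square)
  have nA: "\<not> ?P dvd int a" using assms(1) by simp
  have e1: "int a = (int y - int x) + ?P^2 * Q" using e by simp
  have e2: "int (2 * x + a) = (int y + int x) + ?P^2 * Q" using e by simp
  have nYX: "\<not> ?P dvd int y - int x"
  proof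
    assume "?P dvd int y - int x"
    then have "?P dvd (int y - int x) + ?P^2 * Q" using pq by (rule dvd_add)
    then show False using nA e1 by simp
  qed
  have YX: "?P dvd int y + int x \<longleftrightarrow> p dvd 2 * x + a"
  proof
    assume "?P dvd int y + int x"
    then have "?P dvd (int y + int x) + ?P^2 * Q" using pq by (rule dvd_add)
    then have "?P dvd int (2 * x + a)" unfolding e2 .
    then show "p dvd 2 * x + a" by (simp only: int_dvd_int_iff)
  next
    assume "p dvd 2 * x + a"
    then have "?P dvd int (2 * x + a)" by (simp only: int_dvd_int_iff)
    then have "?P dvd int (2 * x + a) - ?P^2 * Q" using pq by (rule dvd_diff)
    moreover have "int (2 * x + a) - ?P^2 * Q = int y + int x" using e2 by simp
    ultimately show "?P dvd int y + int x" by (simp only:)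
  qed
  show ?thesis
  proof (cases "p dvd x")
    case True
    have "\<not> RR p x y"
    proof
      assume "RR p x y"
      then have "p dvd y" using RR_dvd True by blast
      then have "?P dvd int y - int x" using True by (simp add: dvd_diff)
      then show False using nYX by simp
    qed
    moreover have "\<not> p dvd 2 * x + a"
    proof
      assume "p dvd 2 * x + a"
      moreover have "p dvd 2 * x" using True by simp
      ultimately have "p dvd a" by (simp add: dvd_add_right_iff)
      then show False using assms(1) by simp
    qed
    ultimately show ?thesis by simp
  next
    case False
    then show ?thesis unfolding RR_def using nYX YX by auto
  qed
qed

lemma pt2:
  assumes "p dvd a" "0 < a" "a < p^2" "x < p^2" "y < p^2"
    and e: "int x + int a = (int p)^2 * Q + int y"
  shows "RR p x y \<longleftrightarrow> (\<not> p dvd x \<or> p^2 dvd 2 * x + a)"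
proof -
  let ?P = "int p"
  have pq: "?P dvd ?P^2 * Q" by (simp add: power2_eq_square)
  have A: "?P dvd int a" using assms(1) by simp
  have P2: "?P^2 > 0" using assms(3) by (cases p) auto
  have Al: "int a < ?P^2" "int a > 0" using assms(2,3) by (metis of_nat_less_iff of_nat_power, simp)
  have Xl: "int x < ?P^2" "int y < ?P^2" using assms(4,5) by (metis of_nat_less_iff of_nat_power)+
  have noyx: "y \<noteq> x"
  proof
    assume "y = x"
    then have ea: "int a = ?P^2 * Q" using e by simp
    then have "0 < ?P^2 * Q" using Al by simp
    then have "Q > 0" using P2 by (simp add: zero_less_mult_iff)
    moreover have "?P^2 * Q < ?P^2 * 1" using ea Al by simp
    then have "Q < 1" using P2 by (simp only: mult_less_cancel_left_pos)
    ultimately show False by simp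
  qed
  show ?thesis
  proof (cases "p dvd x")
    case False
    have "?P dvd int a - ?P^2 * Q" using A pq by (rule dvd_diff)
    moreover have "int a - ?P^2 * Q = int y - int x" using e by simp
    ultimately have "?P dvd int y - int x" by simp
    then show ?thesis using False unfolding RR_def by auto
  next
    case True
    have "RR p x y \<longleftrightarrow> x + y = p^2" using True noyx unfolding RR_def by auto
    also have "\<dots> \<longleftrightarrow> p^2 dvd 2 * x + a"
    proof
      assume "x + y = p^2"
      then have "int x + int y = ?P^2" by (metis of_nat_add of_nat_power)
      then have "int (2 * x + a) = ?P^2 * (Q + 1)" using e by (simp add: algebra_simps)
      then have "?P^2 dvd int (2 * x + a)" by simp
      then show "p^2 dvd 2 * x + a" by (metis int_dvd_int_iff of_nat_power)
    next
      assume "p^2 dvd 2 * x + a"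
      then obtain t where t: "2 * x + a = p^2 * t" by blast
      then have "int (2 * x + a) = ?P^2 * int t" by (metis of_nat_mult of_nat_power)
      then have s: "int x + int y = ?P^2 * (int t - Q)" using e by (simp add: algebra_simps)
      have "int t - Q > 0"
      proof (rule ccontr)
        assume "\<not> int t - Q > 0"
        then have "?P^2 * (int t - Q) \<le> 0" using P2 by (simp add: mult_nonneg_nonpos)
        then have "x = 0" "y = 0" using s by simp_all
        then show False using noyx by simp
      qed
      moreover have "?P^2 * (int t - Q) < ?P^2 * 2" using s Xl by linarith
      then have "int t - Q < 2" using P2 by (simp only: mult_less_cancel_left_pos)
      ultimately have "int t - Q = 1" by simp
      then have "int x + int y = ?P^2" using s by simp
      then show "x + y = p^2" by (metis of_nat_add of_nat_power of_nat_eq_iff)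
    qed
    finally show ?thesis using True by simp
  qed
qed

theorem theorem3p5:
  fixes p n :: nat and h :: "nat set \<Rightarrow> nat"
  assumes "prime p" and "odd p" and "n = p ^ 2"
    and "bij_betw h (cosets n (gen_subgroup n (p - 1))) {0..<card (cosets n (gen_subgroup n (p - 1)))}"
  shows "zero_difference_fn n p {p, p ^ 2 - p + 1} (coset_index_fn n (gen_subgroup n (p - 1)) h)"
proof -
  define f where "f = coset_index_fn (p^2) (gen_subgroup (p^2) (p - 1)) h"
  have hb: "bij_betw h (cosets (p^2) (gen_subgroup (p^2) (p - 1))) {0..<card (cosets (p^2) (gen_subgroup (p^2) (p - 1)))}"
    using assms(3,4) by simp
  have p0: "p > 0" using assms(1) prime_gt_0_nat by simp
  have p3: "p \<ge> 3" using prime_ge_2_nat[OF assms(1)] assms(2) by (cases "p = 2") auto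
  have fe: "f x = f y \<longleftrightarrow> RR p x y" if "x < p^2" "y < p^2" for x y
    unfolding f_def by (rule f_eq[OF assms(1,2) that hb])
  have oddn: "odd (p^2)" using assms(2) by simp
  have card1: "card (f ` {0..<p^2}) = p"
  proof -
    have "card (f ` {0..<p^2}) = card (KK p ` {0..<p^2})"
      by (rule card_eq_by_key) (use fe RR_KK[OF assms(1)] in auto)
    then show ?thesis using card_KK_image[OF assms(1,2)] by simp
  qed
  have card2: "card {x \<in> {0..<p^2}. f ((x + a) mod p^2) = f x} \<in> {p, p ^ 2 - p + 1}"
    if a: "a < p^2" "a \<noteq> 0" for a
  proof -
    have e: "int x + int a = (int p)^2 * int ((x + a) div p^2) + int ((x + a) mod p^2)" for x
    proof -
      have "x + a = p^2 * ((x + a) div p^2) + (x + a) mod p^2" by simp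
      then show ?thesis by (metis of_nat_add of_nat_mult of_nat_power)
    qed
    have ml: "(x + a) mod p^2 < p^2" for x using p0 by simp
    have fe2: "f ((x + a) mod p^2) = f x \<longleftrightarrow> RR p x ((x + a) mod p^2)" if "x < p^2" for x
      using fe[OF ml that] RR_sym by blast
    have S: "{x \<in> {0..<p^2}. f ((x + a) mod p^2) = f x} = {x. x < p^2 \<and> RR p x ((x + a) mod p^2)}"
      using fe2 by auto
    show ?thesis
    proof (cases "p dvd a")
      case False
      have "{x. x < p^2 \<and> RR p x ((x + a) mod p^2)} = {x. x < p^2 \<and> p dvd 2 * x + a}"
        using pt1[OF False e] by auto
      moreover have "card {x. x < p^2 \<and> p dvd 2 * x + a} = p"
        using count_lin[OF oddn p0, of a] p0 by (simp add: power2_eq_square)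
      ultimately show ?thesis using S by simp
    next
      case True
      have "{x. x < p^2 \<and> RR p x ((x + a) mod p^2)} =
            {x. x < p^2 \<and> \<not> p dvd x} \<union> {x. x < p^2 \<and> p^2 dvd 2 * x + a}"
        using pt2[OF True _ a(1) _ ml e] a(2) by auto
      moreover have sub: "{x. x < p^2 \<and> p^2 dvd 2 * x + a} \<subseteq> {x. x < p^2 \<and> p dvd x}"
      proof
        fix x assume x: "x \<in> {x. x < p^2 \<and> p^2 dvd 2 * x + a}"
        have "p dvd p^2" by simp
        then have "p dvd 2 * x + a" using x dvd_trans by blast
        then have "p dvd 2 * x" using True by (simp add: dvd_add_left_iff)
        then have "p dvd 2 \<or> p dvd x" using assms(1) prime_dvd_mult_iff by blast
        moreover have "\<not> p dvd 2" using p3 by (auto dest: dvd_imp_le)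
        ultimately show "x \<in> {x. x < p^2 \<and> p dvd x}" using x by auto
      qed
      have c1: "card {x. x < p^2 \<and> p^2 dvd 2 * x + a} = 1"
        using count_lin[OF oddn _ dvd_refl, of a] p0 by simp
      have c2: "card {x. x < p^2 \<and> p dvd x} = p"
        using count_mult[OF p0, of "p^2"] p0 by (simp add: power2_eq_square)
      have c3: "card {x. x < p^2 \<and> \<not> p dvd x} = p^2 - p"
      proof -
        have "{x. x < p^2 \<and> \<not> p dvd x} = {0..<p^2} - {x. x < p^2 \<and> p dvd x}" by auto
        then show ?thesis using c2 by (simp add: card_Diff_subset subset_iff)
      qed
      have "card ({x. x < p^2 \<and> \<not> p dvd x} \<union> {x. x < p^2 \<and> p^2 dvd 2 * x + a}) = (p^2 - p) + 1"
        using sub c1 c3 by (subst card_Un_disjoint) auto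
      ultimately show ?thesis using S by simp
    qed
  qed
  show ?thesis
    unfolding zero_difference_fn_def assms(3) f_def[symmetric] using card1 card2 by auto
qed

end
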